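(* Let $N$ be a positive integer and $\mathbf a,\mathbf b,\mathbf c\in\mathbb R^N$ arbitrary column vectors. For nonnegative integers $l,m,n$ with $l+m+n=N$ let $D_{l,m,n}=[\mathbf a\cdots\mathbf a\ \mathbf b\cdots\mathbf b\ \mathbf c\cdots\mathbf c]$ be the $N\times N$ matrix whose first $l$ columns equal $\mathbf a$, next $m$ columns equal $\mathbf b$, and last $n$ columns equal $\mathbf c$. If $l,m,n,l',m',n'$ are nonnegative integers with $l+m+n=l'+m'+n'=N$, $0\le l<l'$ and $0\le m'<m$, then $$\mathrm{UP}[D_{l,m,n}]+\mathrm{UP}[D_{l',m',n'}]\le \mathrm{UP}[D_{l+1,m-1,n}]+\mathrm{UP}[D_{l'-1,m'+1,n'}].$$
   Context: For a real $N\times N$ matrix $A=[a_{ij}]$, the ultradiscrete permanent is $\mathrm{UP}[A]=\max_{\pi}(a_{1\pi_1}+a_{2\pi_2}+\cdots+a_{N\pi_N})$, the maximum over all permutations $\pi$ of $\{1,\dots,N\}$. *)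

theory Defs
  imports Complex_Main "HOL-Combinatorics.Permutations"
begin

text \<open>N x N real matrices and vectors in R^N are represented as functions on nat,
  with indices 0..N-1 (rows i, columns j). Only the values with indices < N matter.\<close>

definition UP :: "nat \<Rightarrow> (nat \<Rightarrow> nat \<Rightarrow> real) \<Rightarrow> real" where
  "UP N A = Max {(\<Sum>i<N. A i (\<pi> i)) | \<pi>. \<pi> permutes {..<N}}"

definition Dmat :: "(nat \<Rightarrow> real) \<Rightarrow> (nat \<Rightarrow> real) \<Rightarrow> (nat \<Rightarrow> real)
    \<Rightarrow> nat \<Rightarrow> nat \<Rightarrow> nat \<Rightarrow> (nat \<Rightarrow> nat \<Rightarrow> real)" where
  "Dmat a b c l m n = (\<lambda>i j. if j < l then a i else if j < l + m then b i else c i)"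

end

theory Submission
  imports Defs
begin

lemma UP_ge:
  assumes "\<pi> permutes {..<N}"
  shows "(\<Sum>i<N. A i (\<pi> i)) \<le> UP N A"
  unfolding UP_def
  apply (rule Max_ge)
   apply (rule finite_image_set)
  using finite_permutations[of "{..<N}"] apply simp
  using assms by blast

lemma UP_ex:
  "\<exists>\<pi>. \<pi> permutes {..<N} \<and> UP N A = (\<Sum>i<N. A i (\<pi> i))"
proof -
  have fin: "finite {(\<Sum>i<N. A i (\<pi> i)) | \<pi>. \<pi> permutes {..<N}}"
    apply (rule finite_image_set)
    using finite_permutations[of "{..<N}"] by simp
  have ne: "{(\<Sum>i<N. A i (\<pi> i)) | \<pi>. \<pi> permutes {..<N}} \<noteq> {}"
    using permutes_id by blast
  show ?thesis using Max_in[OF fin ne] unfolding UP_def by blast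
qed

lemma sum_one_diff:
  fixes f g :: "nat \<Rightarrow> real"
  assumes "finite S" "i \<in> S" "\<forall>r\<in>S. r \<noteq> i \<longrightarrow> f r = g r"
  shows "sum f S = sum g S + f i - g i"
proof -
  have "sum f S = f i + sum f (S - {i})" using assms by (simp add: sum.remove)
  moreover have "sum g S = g i + sum g (S - {i})" using assms by (simp add: sum.remove)
  moreover have "sum f (S - {i}) = sum g (S - {i})" using assms(3) by (intro sum.cong) auto
  ultimately show ?thesis by simp
qed

lemma sum_two_diff:
  fixes f g :: "nat \<Rightarrow> real"
  assumes "finite S" "i \<in> S" "k \<in> S" "i \<noteq> k" "\<forall>r\<in>S. r \<noteq> i \<longrightarrow> r \<noteq> k \<longrightarrow> f r = g r"
  shows "sum f S = sum g S + (f i - g i) + (f k - g k)"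
proof -
  define h where "h = g(i := f i)"
  have 1: "sum f S = sum h S + f k - h k"
    apply (rule sum_one_diff) using assms unfolding h_def by auto
  have 2: "sum h S = sum g S + h i - g i"
    apply (rule sum_one_diff) using assms unfolding h_def by auto
  show ?thesis using 1 2 assms(4) unfolding h_def by simp
qed

lemma colchange:
  fixes M M' :: "nat \<Rightarrow> nat \<Rightarrow> real"
  assumes pi: "\<pi> permutes {..<N}" and i: "i < N" and t: "t < N"
    and M': "\<forall>r j. j \<noteq> t \<longrightarrow> M' r j = M r j"
    and eqc: "\<forall>r. M r (\<pi> i) = M r t"
  shows "(transpose (\<pi> i) t \<circ> \<pi>) permutes {..<N} \<and>
    (\<Sum>r<N. M' r ((transpose (\<pi> i) t \<circ> \<pi>) r)) = (\<Sum>r<N. M r (\<pi> r)) + M' i t - M i t"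
proof -
  let ?s = "transpose (\<pi> i) t \<circ> \<pi>"
  have pin: "\<pi> i \<in> {..<N}" using permutes_in_image[OF pi] i by simp
  have sp: "?s permutes {..<N}"
    by (rule permutes_compose[OF pi permutes_swap_id]) (use pin t in auto)
  have si: "?s i = t" by simp
  have sr: "?s r \<noteq> t" if "r \<noteq> i" for r
  proof
    assume "?s r = t"
    then have "?s r = ?s i" by simp
    then have "r = i" using permutes_inj[OF sp] by (metis injD)
    with that show False by simp
  qed
  have 1: "(\<Sum>r<N. M' r (?s r)) = (\<Sum>r<N. M r (?s r)) + M' i (?s i) - M i (?s i)"
    apply (rule sum_one_diff) using i M' sr by auto
  have 2: "(\<Sum>r<N. M r (?s r)) = (\<Sum>r<N. M r (\<pi> r))"
  proof (rule sum.cong[OF refl])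
    fix r
    show "M r (?s r) = M r (\<pi> r)"
      using eqc[rule_format, of r] by (auto simp: transpose_def)
  qed
  show ?thesis using sp 1 2 si by simp
qed

lemma rowswap:
  fixes M :: "nat \<Rightarrow> nat \<Rightarrow> real"
  assumes pi: "\<pi> permutes {..<N}" and i: "i < N" and k: "k < N" and ik: "i \<noteq> k"
  shows "(\<pi> \<circ> transpose i k) permutes {..<N} \<and>
    (\<Sum>r<N. M r ((\<pi> \<circ> transpose i k) r)) = (\<Sum>r<N. M r (\<pi> r))
       + (M i (\<pi> k) - M i (\<pi> i)) + (M k (\<pi> i) - M k (\<pi> k))"
proof
  show "(\<pi> \<circ> transpose i k) permutes {..<N}"
    by (rule permutes_compose[OF permutes_swap_id pi]) (use i k in auto)
  show "(\<Sum>r<N. M r ((\<pi> \<circ> transpose i k) r)) = (\<Sum>r<N. M r (\<pi> r))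
       + (M i (\<pi> k) - M i (\<pi> i)) + (M k (\<pi> i) - M k (\<pi> k))"
  proof -
    have "(\<Sum>r<N. M r ((\<pi> \<circ> transpose i k) r)) = (\<Sum>r<N. M r (\<pi> r))
       + (M i ((\<pi> \<circ> transpose i k) i) - M i (\<pi> i)) + (M k ((\<pi> \<circ> transpose i k) k) - M k (\<pi> k))"
      by (rule sum_two_diff) (use i k ik in auto)
    then show ?thesis by simp
  qed
qed

lemma card_perm_pre:
  assumes pi: "\<pi> permutes {..<N}"
  shows "card {i. i < N \<and> P (\<pi> i)} = card {j. j < N \<and> P j}"
proof -
  have "\<pi> ` {i. i < N \<and> P (\<pi> i)} = {j. j < N \<and> P j}"
  proof
    show "\<pi> ` {i. i < N \<and> P (\<pi> i)} \<subseteq> {j. j < N \<and> P j}"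
      using permutes_in_image[OF pi] by auto
    show "{j. j < N \<and> P j} \<subseteq> \<pi> ` {i. i < N \<and> P (\<pi> i)}"
    proof
      fix j assume j: "j \<in> {j. j < N \<and> P j}"
      obtain i where "\<pi> i = j" using permutes_surj[OF pi] by (metis surjD)
      moreover have "i < N" using permutes_in_image[OF pi, of i] j calculation by auto
      ultimately show "j \<in> \<pi> ` {i. i < N \<and> P (\<pi> i)}" using j by auto
    qed
  qed
  moreover have "inj_on \<pi> {i. i < N \<and> P (\<pi> i)}"
    using permutes_inj[OF pi] by (auto intro: inj_on_subset)
  ultimately show ?thesis by (metis card_image)
qed

lemma card_A: "l \<le> N \<Longrightarrow> card {j. j < N \<and> j < l} = l"
proof -
  assume "l \<le> N"
  then have "{j. j < N \<and> j < l} = {..<l}" by auto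
  then show ?thesis by simp
qed

lemma card_B: "l + m \<le> N \<Longrightarrow> card {j. j < N \<and> l \<le> j \<and> j < l + m} = m"
proof -
  assume "l + m \<le> N"
  then have "{j. j < N \<and> l \<le> j \<and> j < l + m} = {l..<l+m}" by auto
  then show ?thesis by simp
qed

theorem proposition2:
  fixes N l m n l' m' n' :: nat and a b c :: "nat \<Rightarrow> real"
  assumes "N > 0"
    and "l + m + n = N" and "l' + m' + n' = N"
    and "l < l'" and "m' < m"
  shows "UP N (Dmat a b c l m n) + UP N (Dmat a b c l' m' n')
     \<le> UP N (Dmat a b c (l + 1) (m - 1) n) + UP N (Dmat a b c (l' - 1) (m' + 1) n')"
proof -
  let ?D = "Dmat a b c l m n" and ?D' = "Dmat a b c l' m' n'"
  let ?E = "Dmat a b c (l + 1) (m - 1) n" and ?E' = "Dmat a b c (l' - 1) (m' + 1) n'"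
  obtain \<pi> where pi: "\<pi> permutes {..<N}" and upD: "UP N ?D = (\<Sum>i<N. ?D i (\<pi> i))"
    using UP_ex by blast
  obtain \<rho> where rho: "\<rho> permutes {..<N}" and upD': "UP N ?D' = (\<Sum>i<N. ?D' i (\<rho> i))"
    using UP_ex by blast
  have pin: "\<And>i. i < N \<Longrightarrow> \<pi> i < N" using permutes_in_image[OF pi] by simp
  have rin: "\<And>i. i < N \<Longrightarrow> \<rho> i < N" using permutes_in_image[OF rho] by simp
  have lN: "l < N" "l' - 1 < N" using assms by auto
  have E: "\<forall>r j. j \<noteq> l \<longrightarrow> ?E r j = ?D r j" using assms by (auto simp: Dmat_def)
  have El: "\<And>r. ?E r l = a r" "\<And>r. ?D r l = b r" using assms by (auto simp: Dmat_def)
  have E': "\<forall>r j. j \<noteq> l' - 1 \<longrightarrow> ?E' r j = ?D' r j" using assms by (auto simp: Dmat_def)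
  have El': "\<And>r. ?E' r (l' - 1) = b r" "\<And>r. ?D' r (l' - 1) = a r" using assms by (auto simp: Dmat_def)
  define SA where "SA = {i. i < N \<and> \<pi> i < l}"
  define SB where "SB = {i. i < N \<and> l \<le> \<pi> i \<and> \<pi> i < l + m}"
  define TA where "TA = {i. i < N \<and> \<rho> i < l'}"
  define TB where "TB = {i. i < N \<and> l' \<le> \<rho> i \<and> \<rho> i < l' + m'}"
  have cSA: "card SA = l" unfolding SA_def
    using card_perm_pre[OF pi, of "\<lambda>j. j < l"] card_A[of l N] assms by simp
  have cTA: "card TA = l'" unfolding TA_def
    using card_perm_pre[OF rho, of "\<lambda>j. j < l'"] card_A[of l' N] assms by simp
  have cSB: "card SB = m" unfolding SB_def
    using card_perm_pre[OF pi, of "\<lambda>j. l \<le> j \<and> j < l + m"] card_B[of l m N] assms by simp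
  have cTB: "card TB = m'" unfolding TB_def
    using card_perm_pre[OF rho, of "\<lambda>j. l' \<le> j \<and> j < l' + m'"] card_B[of l' m' N] assms by simp
  have finS: "finite SA" "finite TB" unfolding SA_def TB_def by auto
  show ?thesis
  proof (cases "\<exists>i. i < N \<and> l \<le> \<pi> i \<and> \<pi> i < l + m \<and> \<rho> i < l'")
    case True
    then obtain i where i: "i < N" "l \<le> \<pi> i" "\<pi> i < l + m" "\<rho> i < l'" by blast
    have c1: "\<forall>r. ?D r (\<pi> i) = ?D r l" using i assms by (auto simp: Dmat_def)
    from colchange[OF pi i(1) lN(1) E c1] obtain \<pi>1 where
      p1: "\<pi>1 permutes {..<N}" "(\<Sum>r<N. ?E r (\<pi>1 r)) = (\<Sum>r<N. ?D r (\<pi> r)) + a i - b i"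
      using El by auto
    have c2: "\<forall>r. ?D' r (\<rho> i) = ?D' r (l' - 1)" using i assms by (auto simp: Dmat_def)
    from colchange[OF rho i(1) lN(2) E' c2] obtain \<rho>1 where
      r1: "\<rho>1 permutes {..<N}" "(\<Sum>r<N. ?E' r (\<rho>1 r)) = (\<Sum>r<N. ?D' r (\<rho> r)) + b i - a i"
      using El' by auto
    show ?thesis using UP_ge[OF p1(1), of ?E] UP_ge[OF r1(1), of ?E'] p1(2) r1(2) upD upD'
      by linarith
  next
    case False
    have "\<exists>k. k < N \<and> l + m \<le> \<pi> k \<and> \<rho> k < l'"
    proof (rule ccontr)
      assume "\<not> ?thesis"
      then have "TA \<subseteq> SA" using False unfolding TA_def SA_def
        by (auto simp: not_less) (meson not_less)
      then have "card TA \<le> card SA" using finS by (simp add: card_mono)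
      then show False using cSA cTA assms by simp
    qed
    then obtain k where k: "k < N" "l + m \<le> \<pi> k" "\<rho> k < l'" by blast
    have "\<exists>i. i < N \<and> l \<le> \<pi> i \<and> \<pi> i < l + m \<and> l' + m' \<le> \<rho> i"
    proof (rule ccontr)
      assume "\<not> ?thesis"
      then have "SB \<subseteq> TB" using False unfolding TB_def SB_def by auto
      then have "card SB \<le> card TB" using finS by (simp add: card_mono)
      then show False using cSB cTB assms by simp
    qed
    then obtain i where i: "i < N" "l \<le> \<pi> i" "\<pi> i < l + m" "l' + m' \<le> \<rho> i" by blast
    have ik: "i \<noteq> k" using i k by auto
    define \<pi>0 where "\<pi>0 = \<pi> \<circ> transpose i k"
    from rowswap[OF pi i(1) k(1) ik, of ?D] have
      p0: "\<pi>0 permutes {..<N}" "(\<Sum>r<N. ?D r (\<pi>0 r)) = (\<Sum>r<N. ?D r (\<pi> r))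
       + (c i - b i) + (b k - c k)"
      unfolding \<pi>0_def using i k assms by (auto simp: Dmat_def)
    have p0k: "\<pi>0 k = \<pi> i" unfolding \<pi>0_def by simp
    have c1: "\<forall>r. ?D r (\<pi>0 k) = ?D r l" using i assms p0k by (auto simp: Dmat_def)
    from colchange[OF p0(1) k(1) lN(1) E c1] obtain \<pi>1 where
      p1: "\<pi>1 permutes {..<N}" "(\<Sum>r<N. ?E r (\<pi>1 r)) = (\<Sum>r<N. ?D r (\<pi>0 r)) + a k - b k"
      using El by auto
    define \<rho>0 where "\<rho>0 = \<rho> \<circ> transpose i k"
    from rowswap[OF rho i(1) k(1) ik, of ?D'] have
      r0: "\<rho>0 permutes {..<N}" "(\<Sum>r<N. ?D' r (\<rho>0 r)) = (\<Sum>r<N. ?D' r (\<rho> r))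
       + (a i - c i) + (c k - a k)"
      unfolding \<rho>0_def using i k assms by (auto simp: Dmat_def)
    have r0i: "\<rho>0 i = \<rho> k" unfolding \<rho>0_def by simp
    have c2: "\<forall>r. ?D' r (\<rho>0 i) = ?D' r (l' - 1)" using k assms r0i by (auto simp: Dmat_def)
    from colchange[OF r0(1) i(1) lN(2) E' c2] obtain \<rho>1 where
      r1: "\<rho>1 permutes {..<N}" "(\<Sum>r<N. ?E' r (\<rho>1 r)) = (\<Sum>r<N. ?D' r (\<rho>0 r)) + b i - a i"
      using El' by auto
    show ?thesis using UP_ge[OF p1(1), of ?E] UP_ge[OF r1(1), of ?E'] p1(2) r1(2) p0(2) r0(2) upD upD'
      by linarith
  qed
qed

end
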